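(* Let $H_A,H_B$ be finite-dimensional complex Hilbert spaces, $h_{1A},h_{2A}$ subspaces of $H_A$, $h_{1B},h_{2B}$ subspaces of $H_B$, and $h_1=h_{1A}\otimes h_{1B}$, $h_2=h_{2A}\otimes h_{2B}$. Suppose $[\Pi_A(h_{1A}),\Pi_A(h_{2A})]=0$ and $[\Pi_B(h_{1B}),\Pi_B(h_{2B})]=0$. Then for every unit vector $\ket s\in H_A\otimes H_B$, $\bra s\Pi(h_1\vee h_2)\ket s\le \bra s\,\Pi_A(h_{1A})\otimes\Pi_B(h_{1B})\,\ket s+\bra s\,\Pi_A(h_{2A})\otimes\Pi_B(h_{2B})\,\ket s.$
   Context: $\Pi_A(k)$, $\Pi_B(k)$, $\Pi(k)$ denote orthogonal projectors onto a subspace $k$ of $H_A$, $H_B$, $H_A\otimes H_B$ respectively. $h\vee h'=\mathrm{span}(h\cup h')$. For subspaces $k_A\subseteq H_A$, $k_B\subseteq H_B$, $k_A\otimes k_B$ is the subspace spanned by all $\ket a\otimes\ket b$, $\ket a\in k_A$, $\ket b\in k_B$. *)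

theory Defs
  imports Complex_Main
begin

text \<open>A finite-dimensional complex Hilbert space with orthonormal basis indexed by a
finite type 'a is modelled as the space of functions 'a => complex with the standard
inner product. H_A (x) H_B is modelled as ('a * 'b) => complex.\<close>

definition cinner :: "('a::finite \<Rightarrow> complex) \<Rightarrow> ('a \<Rightarrow> complex) \<Rightarrow> complex" where
  "cinner u v = (\<Sum>i\<in>UNIV. cnj (u i) * v i)"

definition cscale :: "complex \<Rightarrow> ('a \<Rightarrow> complex) \<Rightarrow> ('a \<Rightarrow> complex)" where
  "cscale c v = (\<lambda>i. c * v i)"

definition csubspace :: "('a \<Rightarrow> complex) set \<Rightarrow> bool" where
  "csubspace S \<longleftrightarrow> (\<lambda>i. 0) \<in> S \<and> (\<forall>x\<in>S. \<forall>y\<in>S. (\<lambda>i. x i + y i) \<in> S)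
     \<and> (\<forall>c. \<forall>x\<in>S. cscale c x \<in> S)"

definition cspan :: "('a \<Rightarrow> complex) set \<Rightarrow> ('a \<Rightarrow> complex) set" where
  "cspan X = \<Inter>{S. csubspace S \<and> X \<subseteq> S}"

definition ssup :: "('a \<Rightarrow> complex) set \<Rightarrow> ('a \<Rightarrow> complex) set \<Rightarrow> ('a \<Rightarrow> complex) set" where
  "ssup h h' = cspan (h \<union> h')"

definition proj :: "('a::finite \<Rightarrow> complex) set \<Rightarrow> ('a \<Rightarrow> complex) \<Rightarrow> ('a \<Rightarrow> complex)" where
  "proj S v = (THE p. p \<in> S \<and> (\<forall>w\<in>S. cinner w (\<lambda>i. v i - p i) = 0))"

definition tens :: "('a \<Rightarrow> complex) \<Rightarrow> ('b \<Rightarrow> complex) \<Rightarrow> ('a \<times> 'b \<Rightarrow> complex)" where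
  "tens a b = (\<lambda>(i, j). a i * b j)"

definition tens_sub :: "('a \<Rightarrow> complex) set \<Rightarrow> ('b \<Rightarrow> complex) set \<Rightarrow> ('a \<times> 'b \<Rightarrow> complex) set" where
  "tens_sub kA kB = cspan {tens a b | a b. a \<in> kA \<and> b \<in> kB}"

definition basis_vec :: "'a \<Rightarrow> ('a \<Rightarrow> complex)" where
  "basis_vec k = (\<lambda>k'. if k' = k then 1 else 0)"

definition op_tens :: "(('a::finite \<Rightarrow> complex) \<Rightarrow> ('a \<Rightarrow> complex)) \<Rightarrow> (('b::finite \<Rightarrow> complex) \<Rightarrow> ('b \<Rightarrow> complex))
     \<Rightarrow> ('a \<times> 'b \<Rightarrow> complex) \<Rightarrow> ('a \<times> 'b \<Rightarrow> complex)" where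
  "op_tens P Q v = (\<lambda>(i, j). \<Sum>(k, l)\<in>UNIV. P (basis_vec k) i * Q (basis_vec l) j * v (k, l))"

end

theory Submission
  imports Defs "HOL-Analysis.Analysis"
begin



lemma inner_vl: "inner (vec_lambda f :: complex^'a::finite) (vec_lambda g) = Re (cinner f g)"
  unfolding inner_vec_def cinner_def inner_complex_def by (simp add: Re_sum)

lemma proj_exists:
  fixes S :: "('a::finite \<Rightarrow> complex) set"
  assumes "csubspace S"
  shows "\<exists>p. p \<in> S \<and> (\<forall>w\<in>S. cinner w (\<lambda>i. v i - p i) = 0)"
proof -
  define S' where "S' = (vec_lambda ` S :: (complex^'a) set)"
  have sub: "subspace S'"
    unfolding subspace_def S'_def
  proof (intro conjI ballI allI)
    show "0 \<in> vec_lambda ` S" using assms unfolding csubspace_def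
      by (metis (no_types) image_eqI zero_vec_def)
  next
    fix x y assume "x \<in> vec_lambda ` S" "y \<in> vec_lambda ` S"
    then obtain a b where "a \<in> S" "b \<in> S" "x = vec_lambda a" "y = vec_lambda b" by auto
    moreover have "(\<lambda>i. a i + b i) \<in> S" using assms \<open>a\<in>S\<close> \<open>b\<in>S\<close> unfolding csubspace_def by blast
    moreover have "vec_lambda a + vec_lambda b = vec_lambda (\<lambda>i. a i + b i)"
      by (simp add: vec_eq_iff)
    ultimately show "x + y \<in> vec_lambda ` S" by auto
  next
    fix c :: real and x assume "x \<in> vec_lambda ` S"
    then obtain a where "a \<in> S" "x = vec_lambda a" by auto
    moreover have "cscale (of_real c) a \<in> S" using assms \<open>a\<in>S\<close> unfolding csubspace_def by blast
    moreover have "c *\<^sub>R vec_lambda a = vec_lambda (cscale (of_real c) a)"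
      by (simp add: vec_eq_iff cscale_def complex_eq_iff)
    ultimately show "c *\<^sub>R x \<in> vec_lambda ` S" by auto
  qed
  obtain y z where y: "y \<in> span S'" and z: "\<And>w. w \<in> span S' \<Longrightarrow> orthogonal z w"
    and yz: "vec_lambda v = y + z"
    using orthogonal_subspace_decomp_exists by blast
  have yS: "y \<in> S'" using y sub by (metis span_eq_iff)
  then obtain p where p: "p \<in> S" "y = vec_lambda p" unfolding S'_def by auto
  have zz: "vec_nth z = (\<lambda>i. v i - p i)"
    using yz p(2) by (auto simp: vec_eq_iff)
  have re0: "Re (cinner w (\<lambda>i. v i - p i)) = 0" if "w \<in> S" for w
  proof -
    have "vec_lambda w \<in> span S'" using that S'_def by (simp add: span_base)
    then have "inner (vec_lambda w) z = 0" using z by (metis orthogonal_def inner_commute)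
    moreover have "z = vec_lambda (\<lambda>i. v i - p i)" using zz by (metis vec_nth_inverse)
    ultimately show ?thesis using inner_vl[of w "\<lambda>i. v i - p i"] by simp
  qed
  have "cinner w (\<lambda>i. v i - p i) = 0" if "w \<in> S" for w
  proof -
    have "cscale \<i> w \<in> S" using assms that unfolding csubspace_def by blast
    then have "Re (cinner (cscale \<i> w) (\<lambda>i. v i - p i)) = 0" by (rule re0)
    moreover have "cinner (cscale \<i> w) (\<lambda>i. v i - p i) = - \<i> * cinner w (\<lambda>i. v i - p i)"
      unfolding cinner_def cscale_def by (simp add: sum_distrib_left algebra_simps)
    ultimately have "Im (cinner w (\<lambda>i. v i - p i)) = 0" by simp
    with re0[OF that] show ?thesis by (simp add: complex_eq_iff)
  qed
  with p show ?thesis by blast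
qed


lemma cinner_add_right: "cinner x (\<lambda>i. y i + z i) = cinner x y + cinner x z"
  unfolding cinner_def by (simp add: distrib_left sum.distrib)
lemma cinner_diff_right: "cinner x (\<lambda>i. y i - z i) = cinner x y - cinner x z"
  unfolding cinner_def by (simp add: right_diff_distrib sum_subtractf)
lemma cinner_add_left: "cinner (\<lambda>i. y i + z i) x = cinner y x + cinner z x"
  unfolding cinner_def by (simp add: distrib_right sum.distrib)
lemma cinner_diff_left: "cinner (\<lambda>i. y i - z i) x = cinner y x - cinner z x"
  unfolding cinner_def by (simp add: left_diff_distrib sum_subtractf)
lemma cinner_scale_right: "cinner x (cscale c y) = c * cinner x y"
  unfolding cinner_def cscale_def by (simp add: sum_distrib_left algebra_simps)
lemma cinner_scale_left: "cinner (cscale c y) x = cnj c * cinner y x"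
  unfolding cinner_def cscale_def by (simp add: sum_distrib_left algebra_simps)
lemma cinner_commute: "cinner y x = cnj (cinner x y)"
  unfolding cinner_def by (simp add: mult.commute)
lemma cinner_zero_right: "cinner x (\<lambda>i. 0) = 0"
  unfolding cinner_def by simp
lemma cinner_self: "cinner x x = of_real (\<Sum>i\<in>UNIV. (cmod (x i))^2)"
proof -
  have e: "cnj (x i) * x i = of_real ((cmod (x i))^2)" for i
    by (metis complex_norm_square mult.commute)
  show ?thesis unfolding cinner_def of_real_sum by (rule sum.cong[OF refl]) (rule e)
qed
lemma cinner_self_Re: "Re (cinner x x) \<ge> 0"
  unfolding cinner_self by (simp add: sum_nonneg)
lemma cinner_self_eq0: "cinner x x = 0 \<Longrightarrow> x = (\<lambda>i. 0)"
proof -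
  assume "cinner x x = 0"
  then have s0: "(\<Sum>i\<in>UNIV. (cmod (x i))^2) = 0" unfolding cinner_self by (metis of_real_eq_0_iff)
  have iff: "(\<Sum>i\<in>UNIV. (cmod (x i))^2) = 0 \<longleftrightarrow> (\<forall>i\<in>UNIV. (cmod (x i))^2 = 0)"
    by (rule sum_nonneg_eq_0_iff) (rule finite, rule zero_le_power2)
  have "(cmod (x i))^2 = 0" for i using s0 iff by blast
  then have "x i = 0" for i by (metis norm_eq_zero zero_eq_power2)
  then show ?thesis by (rule ext)
qed

lemma csub_diff: "csubspace S \<Longrightarrow> x \<in> S \<Longrightarrow> y \<in> S \<Longrightarrow> (\<lambda>i. x i - y i) \<in> S"
proof -
  assume S: "csubspace S" "x \<in> S" "y \<in> S"
  then have "cscale (-1) y \<in> S" unfolding csubspace_def by blast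
  with S have "(\<lambda>i. x i + cscale (-1) y i) \<in> S" unfolding csubspace_def by blast
  then show ?thesis by (simp add: cscale_def)
qed
lemma csub_add: "csubspace S \<Longrightarrow> x \<in> S \<Longrightarrow> y \<in> S \<Longrightarrow> (\<lambda>i. x i + y i) \<in> S"
  unfolding csubspace_def by blast
lemma csub_scale: "csubspace S \<Longrightarrow> x \<in> S \<Longrightarrow> cscale c x \<in> S"
  unfolding csubspace_def by blast
lemma csub_zero: "csubspace S \<Longrightarrow> (\<lambda>i. 0) \<in> S"
  unfolding csubspace_def by blast
lemma csub_sum: assumes S: "csubspace S" and fin: "finite A" shows "(\<And>k. k \<in> A \<Longrightarrow> g k \<in> S) \<Longrightarrow> (\<lambda>i. \<Sum>k\<in>A. g k i) \<in> S"
  using fin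
proof (induction A rule: finite_induct)
  case empty then show ?case by (simp add: csub_zero S)
next
  case (insert a A)
  then show ?case using csub_add[OF S, of "g a" "\<lambda>i. \<Sum>k\<in>A. g k i"] by simp
qed

lemma cspan_csub: "csubspace (cspan X)"
  unfolding cspan_def csubspace_def by auto
lemma cspan_sup: "X \<subseteq> cspan X"
  unfolding cspan_def by auto
lemma cspan_least: "csubspace S \<Longrightarrow> X \<subseteq> S \<Longrightarrow> cspan X \<subseteq> S"
  unfolding cspan_def by auto

lemma cinner_zero_left: "cinner (\<lambda>i. 0) x = 0"
  unfolding cinner_def by simp
lemma orth_csub: "csubspace {w. cinner w x = 0}"
  unfolding csubspace_def by (simp add: cinner_add_left cinner_scale_left cinner_zero_left)

lemma orth_span: "(\<And>w. w \<in> X \<Longrightarrow> cinner w x = 0) \<Longrightarrow> w \<in> cspan X \<Longrightarrow> cinner w x = 0"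
  using cspan_least[OF orth_csub, of X x] by blast




lemma proj_unique:
  assumes S: "csubspace S" and p: "p \<in> S" "\<forall>w\<in>S. cinner w (\<lambda>i. v i - p i) = 0"
    and q: "q \<in> S" "\<forall>w\<in>S. cinner w (\<lambda>i. v i - q i) = 0"
  shows "p = q"
proof -
  have d: "(\<lambda>i. p i - q i) \<in> S" using csub_diff[OF S p(1) q(1)] .
  have "cinner (\<lambda>i. p i - q i) (\<lambda>i. p i - q i)
      = cinner (\<lambda>i. p i - q i) (\<lambda>i. (v i - q i) - (v i - p i))" by simp
  also have "\<dots> = 0" unfolding cinner_diff_right[of _ "\<lambda>i. v i - q i" "\<lambda>i. v i - p i"]
    using d p q by simp
  finally have "(\<lambda>i. p i - q i) = (\<lambda>i. 0)" by (rule cinner_self_eq0)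
  then show ?thesis by (simp add: fun_eq_iff)
qed

definition lin :: "(('a::finite \<Rightarrow> complex) \<Rightarrow> ('b::finite \<Rightarrow> complex)) \<Rightarrow> bool" where
  "lin F \<longleftrightarrow> (\<forall>x y. F (\<lambda>i. x i + y i) = (\<lambda>i. F x i + F y i)) \<and> (\<forall>c x. F (cscale c x) = cscale c (F x))"

definition sa :: "(('a::finite \<Rightarrow> complex) \<Rightarrow> ('a \<Rightarrow> complex)) \<Rightarrow> bool" where
  "sa F \<longleftrightarrow> (\<forall>x y. cinner x (F y) = cinner (F x) y)"

definition isproj :: "(('a::finite \<Rightarrow> complex) \<Rightarrow> ('a \<Rightarrow> complex)) \<Rightarrow> bool" where
  "isproj F \<longleftrightarrow> lin F \<and> sa F \<and> (\<forall>x. F (F x) = F x)"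

lemma lin_add: "lin F \<Longrightarrow> F (\<lambda>i. x i + y i) = (\<lambda>i. F x i + F y i)"
  unfolding lin_def by blast
lemma lin_scale: "lin F \<Longrightarrow> F (cscale c x) = cscale c (F x)"
  unfolding lin_def by blast
lemma lin_zero: "lin F \<Longrightarrow> F (\<lambda>i. 0) = (\<lambda>i. 0)"
  using lin_scale[of F 0 "\<lambda>i. 0"] by (simp add: cscale_def)
lemma lin_diff: "lin F \<Longrightarrow> F (\<lambda>i. x i - y i) = (\<lambda>i. F x i - F y i)"
proof -
  assume L: "lin F"
  have "F (\<lambda>i. x i - y i) = F (\<lambda>i. x i + cscale (-1) y i)" by (simp add: cscale_def)
  also have "\<dots> = (\<lambda>i. F x i + cscale (-1) (F y) i)" using lin_add[OF L] lin_scale[OF L]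
    by metis
  finally show ?thesis by (simp add: cscale_def)
qed
lemma lin_sum: assumes L: "lin F" and fin: "finite A"
  shows "F (\<lambda>i. \<Sum>k\<in>A. g k i) = (\<lambda>i. \<Sum>k\<in>A. F (g k) i)"
  using fin
proof (induction A rule: finite_induct)
  case empty then show ?case using lin_zero[OF L] by simp
next
  case (insert a A)
  then show ?case using lin_add[OF L, of "g a" "\<lambda>i. \<Sum>k\<in>A. g k i"] by simp
qed

lemma vec_expand: "(x::'a::finite\<Rightarrow>complex) = (\<lambda>i. \<Sum>k\<in>UNIV. cscale (x k) (basis_vec k) i)"
proof -
  have "(\<Sum>k\<in>UNIV. x k * (if j = k then 1 else 0)) = x j" for j
  proof -
    have "(\<Sum>k\<in>UNIV. x k * (if j = k then 1 else 0)) = (\<Sum>k\<in>UNIV. if j = k then x k else 0)"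
      by (rule sum.cong) auto
    also have "\<dots> = x j" using sum.delta'[of UNIV j x] by simp
    finally show ?thesis .
  qed
  then show ?thesis by (simp add: fun_eq_iff cscale_def basis_vec_def)
qed

lemma lin_expand: "lin F \<Longrightarrow> F x = (\<lambda>i. \<Sum>k\<in>UNIV. x k * F (basis_vec k) i)"
proof -
  assume L: "lin F"
  have "F x = F (\<lambda>i. \<Sum>k\<in>UNIV. cscale (x k) (basis_vec k) i)" by (subst vec_expand) simp
  also have "\<dots> = (\<lambda>i. \<Sum>k\<in>UNIV. F (cscale (x k) (basis_vec k)) i)" by (rule lin_sum[OF L]) simp
  also have "\<dots> = (\<lambda>i. \<Sum>k\<in>UNIV. cscale (x k) (F (basis_vec k)) i)" by (simp only: lin_scale[OF L])
  finally show ?thesis by (simp add: cscale_def)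
qed

lemma lin_eqI: "lin F \<Longrightarrow> lin G \<Longrightarrow> (\<And>k. F (basis_vec k) = G (basis_vec k)) \<Longrightarrow> F = G"
  by (rule ext, subst lin_expand, assumption, subst lin_expand[of G], assumption) simp

lemma lin_comp: "lin F \<Longrightarrow> lin G \<Longrightarrow> lin (F \<circ> G)"
  unfolding lin_def by simp

lemma proj_char:
  assumes S: "csubspace S"
  shows "proj S v \<in> S \<and> (\<forall>w\<in>S. cinner w (\<lambda>i. v i - proj S v i) = 0)"
proof -
  obtain p where p: "p \<in> S \<and> (\<forall>w\<in>S. cinner w (\<lambda>i. v i - p i) = 0)"
    using proj_exists[OF S] by blast
  have u: "\<And>q. q \<in> S \<and> (\<forall>w\<in>S. cinner w (\<lambda>i. v i - q i) = 0) \<Longrightarrow> q = p"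
  proof -
    fix q assume q: "q \<in> S \<and> (\<forall>w\<in>S. cinner w (\<lambda>i. v i - q i) = 0)"
    show "q = p" using proj_unique[OF S conjunct1[OF q] conjunct2[OF q] conjunct1[OF p] conjunct2[OF p]] .
  qed
  show ?thesis unfolding proj_def
    using theI[where P="\<lambda>q. q \<in> S \<and> (\<forall>w\<in>S. cinner w (\<lambda>i. v i - q i) = 0)", OF p u] .
qed

lemma proj_eqI:
  assumes S: "csubspace S" and p: "p \<in> S" and o: "\<forall>w\<in>S. cinner w (\<lambda>i. v i - p i) = 0"
  shows "proj S v = p"
proof -
  have c: "proj S v \<in> S \<and> (\<forall>w\<in>S. cinner w (\<lambda>i. v i - proj S v i) = 0)" by (rule proj_char[OF S])
  show ?thesis using proj_unique[OF S conjunct1[OF c] conjunct2[OF c] p o] .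
qed

lemma proj_in: assumes "csubspace S" shows "proj S v \<in> S"
  using proj_char[OF assms] by (rule conjunct1)
lemma proj_fix: assumes S: "csubspace S" and v: "v \<in> S" shows "proj S v = v"
proof (rule proj_eqI[OF S v])
  have "(\<lambda>i. v i - v i) = (\<lambda>i. 0)" by (rule ext) (rule diff_self)
  then show "\<forall>w\<in>S. cinner w (\<lambda>i. v i - v i) = 0" using cinner_zero_right by metis
qed

lemma proj_isproj: assumes S: "csubspace S" shows "isproj (proj S)"
proof -
  have orth: "\<And>w v. w \<in> S \<Longrightarrow> cinner w (\<lambda>i. v i - proj S v i) = 0" using proj_char[OF S] by blast
  have add: "proj S (\<lambda>i. x i + y i) = (\<lambda>i. proj S x i + proj S y i)" for x y
  proof (rule proj_eqI[OF S])
    show "(\<lambda>i. proj S x i + proj S y i) \<in> S" by (rule csub_add[OF S proj_in[OF S] proj_in[OF S]])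
    show "\<forall>w\<in>S. cinner w (\<lambda>i. x i + y i - (proj S x i + proj S y i)) = 0"
    proof
      fix w assume w: "w \<in> S"
      have "cinner w (\<lambda>i. x i + y i - (proj S x i + proj S y i))
          = cinner w (\<lambda>i. (x i - proj S x i) + (y i - proj S y i))" by (simp add: algebra_simps)
      also have "\<dots> = 0" unfolding cinner_add_right[of w "\<lambda>i. x i - proj S x i" "\<lambda>i. y i - proj S y i"] orth[OF w] by simp
      finally show "cinner w (\<lambda>i. x i + y i - (proj S x i + proj S y i)) = 0" .
    qed
  qed
  have scl: "proj S (cscale c x) = cscale c (proj S x)" for c x
  proof (rule proj_eqI[OF S])
    show "cscale c (proj S x) \<in> S" by (rule csub_scale[OF S proj_in[OF S]])
    show "\<forall>w\<in>S. cinner w (\<lambda>i. cscale c x i - cscale c (proj S x) i) = 0"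
    proof
      fix w assume w: "w \<in> S"
      have "cinner w (\<lambda>i. cscale c x i - cscale c (proj S x) i) = cinner w (cscale c (\<lambda>i. x i - proj S x i))"
        by (simp add: cscale_def algebra_simps)
      also have "\<dots> = 0" unfolding cinner_scale_right orth[OF w] by simp
      finally show "cinner w (\<lambda>i. cscale c x i - cscale c (proj S x) i) = 0" .
    qed
  qed
  have idem: "proj S (proj S x) = proj S x" for x by (rule proj_fix[OF S proj_in[OF S]])
  have sa1: "cinner x (proj S y) = cinner (proj S x) (proj S y)" for x y
  proof -
    have "cinner (proj S y) (\<lambda>i. x i - proj S x i) = 0" by (rule orth[OF proj_in[OF S]])
    then have "cinner (\<lambda>i. x i - proj S x i) (proj S y) = 0" by (subst cinner_commute) simp
    then show ?thesis by (simp add: cinner_diff_left)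
  qed
  have sa2: "cinner (proj S x) y = cinner (proj S x) (proj S y)" for x y
  proof -
    have "cinner (proj S x) (\<lambda>i. y i - proj S y i) = 0" by (rule orth[OF proj_in[OF S]])
    then show ?thesis by (simp add: cinner_diff_right)
  qed
  have sa: "cinner x (proj S y) = cinner (proj S x) y" for x y
    using sa1[of x y] sa2[of x y] by (rule trans[OF _ sym])
  show ?thesis unfolding isproj_def lin_def sa_def
    by (intro conjI allI add scl idem sa)
qed

lemma isproj_comp:
  assumes P: "isproj P" and Q: "isproj Q" and c: "P \<circ> Q = Q \<circ> P"
  shows "isproj (P \<circ> Q)"
proof -
  have c': "P (Q x) = Q (P x)" for x using c by (metis comp_apply)
  have "lin (P \<circ> Q)" using P Q lin_comp unfolding isproj_def by blast
  moreover have "sa (P \<circ> Q)" unfolding sa_def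
  proof (intro allI)
    fix x y
    have sP: "\<And>x y. cinner x (P y) = cinner (P x) y" using P unfolding isproj_def sa_def by blast
    have sQ: "\<And>x y. cinner x (Q y) = cinner (Q x) y" using Q unfolding isproj_def sa_def by blast
    have "cinner x ((P \<circ> Q) y) = cinner (P x) (Q y)" using sP[of x "Q y"] by simp
    also have "\<dots> = cinner (Q (P x)) y" by (rule sQ)
    also have "\<dots> = cinner ((P \<circ> Q) x) y" using c'[of x] by simp
    finally show "cinner x ((P \<circ> Q) y) = cinner ((P \<circ> Q) x) y" .
  qed
  moreover have "P (Q (P (Q x))) = P (Q x)" for x using P Q c' unfolding isproj_def by metis
  ultimately show ?thesis unfolding isproj_def comp_apply by blast
qed

lemma isproj_pos: "isproj F \<Longrightarrow> Re (cinner s (F s)) \<ge> 0"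
  unfolding isproj_def sa_def by (metis cinner_self_Re)



definition kern :: "(('a::finite \<Rightarrow> complex) \<Rightarrow> ('a \<Rightarrow> complex)) \<Rightarrow> (('b::finite \<Rightarrow> complex) \<Rightarrow> ('b \<Rightarrow> complex))
   \<Rightarrow> 'a \<times> 'b \<Rightarrow> 'a \<times> 'b \<Rightarrow> complex" where
  "kern P Q m n = P (basis_vec (fst n)) (fst m) * Q (basis_vec (snd n)) (snd m)"

lemma op_tens_alt: "op_tens P Q v = (\<lambda>m. \<Sum>n\<in>UNIV. kern P Q m n * v n)"
  by (auto simp: op_tens_def kern_def fun_eq_iff case_prod_beta)

lemma op_tens_lin: "lin (op_tens P Q)"
  unfolding lin_def op_tens_alt cscale_def
  by (simp add: distrib_left sum.distrib sum_distrib_left algebra_simps)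

lemma sum_pairs: "(\<Sum>n\<in>(UNIV::('a::finite\<times>'b::finite) set). f n) = (\<Sum>k\<in>UNIV. \<Sum>l\<in>UNIV. f (k,l))"
  by (subst sum.cartesian_product) (simp add: case_prod_beta)

lemma op_tens_tens:
  assumes P: "lin P" and Q: "lin Q"
  shows "op_tens P Q (tens a b) = tens (P a) (Q b)"
proof (rule ext, clarify)
  fix i j
  have "op_tens P Q (tens a b) (i, j) = (\<Sum>k\<in>UNIV. \<Sum>l\<in>UNIV. (a k * P (basis_vec k) i) * (b l * Q (basis_vec l) j))"
    unfolding op_tens_alt kern_def tens_def by (subst sum_pairs) (simp add: algebra_simps)
  also have "\<dots> = (\<Sum>k\<in>UNIV. a k * P (basis_vec k) i) * (\<Sum>l\<in>UNIV. b l * Q (basis_vec l) j)"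
    by (simp add: sum_product)
  also have "\<dots> = tens (P a) (Q b) (i, j)"
    using lin_expand[OF P, of a] lin_expand[OF Q, of b] unfolding tens_def by simp
  finally show "op_tens P Q (tens a b) (i, j) = tens (P a) (Q b) (i, j)" .
qed

lemma tens_basis: "basis_vec (k, l) = tens (basis_vec k) (basis_vec l)"
  by (auto simp: basis_vec_def tens_def fun_eq_iff)

lemma tens_eqI:
  fixes F G :: "('a::finite \<times> 'b::finite \<Rightarrow> complex) \<Rightarrow> ('c::finite \<Rightarrow> complex)"
  assumes "lin F" "lin G" "\<And>a b. F (tens a b) = G (tens a b)"
  shows "F = G"
  by (rule lin_eqI[OF assms(1,2)]) (metis assms(3) tens_basis surj_pair)

lemma op_tens_comp:
  assumes "lin P" "lin Q" "lin P'" "lin Q'"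
  shows "op_tens P Q \<circ> op_tens P' Q' = op_tens (P \<circ> P') (Q \<circ> Q')"
proof (rule tens_eqI)
  show "lin (op_tens P Q \<circ> op_tens P' Q')" by (rule lin_comp[OF op_tens_lin op_tens_lin])
  show "lin (op_tens (P \<circ> P') (Q \<circ> Q'))" by (rule op_tens_lin)
  fix a b
  show "(op_tens P Q \<circ> op_tens P' Q') (tens a b) = op_tens (P \<circ> P') (Q \<circ> Q') (tens a b)"
    using assms lin_comp[OF assms(1,3)] lin_comp[OF assms(2,4)] by (simp add: op_tens_tens)
qed

lemma cinner_basis_left: "cinner (basis_vec i) f = f (i::'a::finite)"
proof -
  have "cinner (basis_vec i) f = (\<Sum>k\<in>UNIV. if i = k then f k else 0)"
    unfolding cinner_def basis_vec_def by (rule sum.cong) auto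
  also have "\<dots> = f i" using sum.delta'[of UNIV i f] by simp
  finally show ?thesis .
qed

lemma cinner_basis_right: "cinner f (basis_vec i) = cnj (f (i::'a::finite))"
  using cinner_basis_left[of i f] cinner_commute[of f "basis_vec i"] by simp

lemma sa_entry: "sa P \<Longrightarrow> cnj (P (basis_vec i) k) = P (basis_vec k) i"
  unfolding sa_def by (metis cinner_basis_left cinner_basis_right)

lemma kern_sa:
  assumes K: "\<And>m n. cnj (K n m) = K m n"
  shows "cinner x (\<lambda>m. \<Sum>n\<in>UNIV. K m n * y n) = cinner (\<lambda>n. \<Sum>m\<in>UNIV. K n m * x m) y"
proof -
  have "cinner x (\<lambda>m. \<Sum>n\<in>UNIV. K m n * y n) = (\<Sum>m\<in>UNIV. \<Sum>n\<in>UNIV. cnj (x m) * K m n * y n)"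
    unfolding cinner_def by (simp add: sum_distrib_left mult.assoc)
  also have "\<dots> = (\<Sum>n\<in>UNIV. \<Sum>m\<in>UNIV. cnj (x m) * K m n * y n)" by (rule sum.swap)
  also have "\<dots> = cinner (\<lambda>n. \<Sum>m\<in>UNIV. K n m * x m) y"
    unfolding cinner_def cnj_sum complex_cnj_mult K sum_distrib_right by (intro sum.cong refl) (simp add: mult_ac)
  finally show ?thesis .
qed

lemma op_tens_sa:
  assumes "sa P" "sa Q"
  shows "sa (op_tens P Q)"
  unfolding sa_def op_tens_alt
proof (intro allI)
  fix x y :: "'a \<times> 'b \<Rightarrow> complex"
  have "\<And>m n. cnj (kern P Q n m) = kern P Q m n"
    unfolding kern_def using sa_entry[OF assms(1)] sa_entry[OF assms(2)] by simp
  then show "cinner x (\<lambda>m. \<Sum>n\<in>UNIV. kern P Q m n * y n) = cinner (\<lambda>m. \<Sum>n\<in>UNIV. kern P Q m n * x n) y"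
    by (rule kern_sa)
qed

lemma op_tens_isproj:
  assumes P: "isproj P" and Q: "isproj Q"
  shows "isproj (op_tens P Q)"
proof -
  have lP: "lin P" and lQ: "lin Q" using P Q unfolding isproj_def by auto
  have PP: "P \<circ> P = P" and QQ: "Q \<circ> Q = Q" using P Q unfolding isproj_def by auto
  have "op_tens P Q \<circ> op_tens P Q = op_tens P Q"
    using op_tens_comp[OF lP lQ lP lQ] PP QQ by simp
  then have "op_tens P Q (op_tens P Q x) = op_tens P Q x" for x by (metis comp_apply)
  moreover have "sa (op_tens P Q)" using P Q op_tens_sa unfolding isproj_def by blast
  ultimately show ?thesis unfolding isproj_def using op_tens_lin by blast
qed

lemma op_tens_range:
  assumes "\<And>k. P (basis_vec k) \<in> hA" "\<And>l. Q (basis_vec l) \<in> hB"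
  shows "op_tens P Q v \<in> tens_sub hA hB"
proof -
  have "op_tens P Q v = (\<lambda>m. \<Sum>n\<in>UNIV. cscale (v n) (tens (P (basis_vec (fst n))) (Q (basis_vec (snd n)))) m)"
    unfolding op_tens_alt kern_def cscale_def tens_def by (auto simp: fun_eq_iff case_prod_beta mult.commute)
  also have "\<dots> \<in> tens_sub hA hB" unfolding tens_sub_def
    by (rule csub_sum[OF cspan_csub], simp, rule csub_scale[OF cspan_csub], rule cspan_sup[THEN subsetD])
      (blast intro: assms)
  finally show ?thesis .
qed



theorem mainTheorem4:
  fixes h1A h2A :: "('a::finite \<Rightarrow> complex) set"
    and h1B h2B :: "('b::finite \<Rightarrow> complex) set"
    and s :: "'a \<times> 'b \<Rightarrow> complex"
  assumes "csubspace h1A" "csubspace h2A" "csubspace h1B" "csubspace h2B"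
    and "proj h1A \<circ> proj h2A = proj h2A \<circ> proj h1A"
    and "proj h1B \<circ> proj h2B = proj h2B \<circ> proj h1B"
    and "cinner s s = 1"
  shows "Re (cinner s (proj (ssup (tens_sub h1A h1B) (tens_sub h2A h2B)) s))
         \<le> Re (cinner s (op_tens (proj h1A) (proj h1B) s))
          + Re (cinner s (op_tens (proj h2A) (proj h2B) s))"
proof -
  define P1 where "P1 = proj h1A"
  define P2 where "P2 = proj h2A"
  define Q1 where "Q1 = proj h1B"
  define Q2 where "Q2 = proj h2B"
  have iP1: "isproj P1" and iP2: "isproj P2" and iQ1: "isproj Q1" and iQ2: "isproj Q2"
    unfolding P1_def P2_def Q1_def Q2_def using proj_isproj assms(1-4) by auto
  have lP1: "lin P1" and lP2: "lin P2" and lQ1: "lin Q1" and lQ2: "lin Q2"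
    using iP1 iP2 iQ1 iQ2 unfolding isproj_def by auto
  define R1 where "R1 = op_tens P1 Q1"
  define R2 where "R2 = op_tens P2 Q2"
  define R12 where "R12 = op_tens (P1 \<circ> P2) (Q1 \<circ> Q2)"
  have c12: "R1 \<circ> R2 = R12" unfolding R1_def R2_def R12_def by (rule op_tens_comp[OF lP1 lQ1 lP2 lQ2])
  have c21: "R2 \<circ> R1 = R12" unfolding R1_def R2_def R12_def
    using op_tens_comp[OF lP2 lQ2 lP1 lQ1] assms(5,6) unfolding P1_def P2_def Q1_def Q2_def by simp
  have iR1: "isproj R1" unfolding R1_def by (rule op_tens_isproj[OF iP1 iQ1])
  have iR2: "isproj R2" unfolding R2_def by (rule op_tens_isproj[OF iP2 iQ2])
  have iR12: "isproj R12" unfolding R12_def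
    by (rule op_tens_isproj[OF isproj_comp[OF iP1 iP2] isproj_comp[OF iQ1 iQ2]])
      (use assms(5,6) in \<open>simp_all add: P1_def P2_def Q1_def Q2_def\<close>)
  have lR1: "lin R1" and lR2: "lin R2" and idR1: "\<And>x. R1 (R1 x) = R1 x" and idR2: "\<And>x. R2 (R2 x) = R2 x"
    and saR1: "sa R1" and saR2: "sa R2"
    using iR1 iR2 unfolding isproj_def by auto
  have r12: "R1 (R2 x) = R12 x" for x using c12 by (metis comp_apply)
  have r21: "R2 (R1 x) = R12 x" for x using c21 by (metis comp_apply)
  define T1 where "T1 = tens_sub h1A h1B"
  define T2 where "T2 = tens_sub h2A h2B"
  define K where "K = ssup T1 T2"
  have Kc: "csubspace K" unfolding K_def ssup_def by (rule cspan_csub)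
  have T1K: "T1 \<subseteq> K" and T2K: "T2 \<subseteq> K" unfolding K_def ssup_def using cspan_sup by blast+
  have R1T: "R1 x \<in> T1" for x unfolding R1_def T1_def
    by (rule op_tens_range) (simp_all add: P1_def Q1_def proj_in assms)
  have R2T: "R2 x \<in> T2" for x unfolding R2_def T2_def
    by (rule op_tens_range) (simp_all add: P2_def Q2_def proj_in assms)
  define t where "t = (\<lambda>m. R1 s m + R2 s m - R12 s m)"
  have tK: "t \<in> K" unfolding t_def
    by (intro csub_diff[OF Kc] csub_add[OF Kc])
      (use T1K T2K R1T R2T r12[of s, symmetric] R1T[of "R2 s"] in auto)
  have a1: "R1 (R12 s) = R12 s" by (metis r12 idR1)
  have a2: "R2 (R12 s) = R12 s" by (metis r21 idR2)
  have R1t: "R1 t = R1 s" unfolding t_def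
    unfolding lin_diff[OF lR1, of "\<lambda>m. R1 s m + R2 s m" "R12 s"] lin_add[OF lR1] idR1 r12 a1 by simp
  have R2t: "R2 t = R2 s" unfolding t_def
    unfolding lin_diff[OF lR2, of "\<lambda>m. R1 s m + R2 s m" "R12 s"] lin_add[OF lR2] idR2 r21 a2 by simp
  have orth: "cinner w (\<lambda>i. s i - t i) = 0" if "w \<in> K" for w
  proof -
    have g1: "cinner w (\<lambda>i. s i - t i) = 0" if "w \<in> T1" for w
    proof -
      have "cinner w (\<lambda>i. s i - t i) = 0" if wG: "w \<in> {tens a b |a b. a \<in> h1A \<and> b \<in> h1B}" for w
      proof -
        obtain a b where w: "w = tens a b" "a \<in> h1A" "b \<in> h1B" using wG by blast
        have "R1 w = w" unfolding w(1) R1_def using op_tens_tens[OF lP1 lQ1, of a b] proj_fix[OF assms(1) w(2)] proj_fix[OF assms(3) w(3)]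
          by (simp add: P1_def Q1_def)
        then have "cinner w (\<lambda>i. s i - t i) = cinner w (R1 (\<lambda>i. s i - t i))"
          using saR1 unfolding sa_def by metis
        also have "\<dots> = 0" using lin_diff[OF lR1] R1t by (simp add: cinner_zero_right)
        finally show ?thesis .
      qed
      then show ?thesis using orth_span that unfolding T1_def tens_sub_def by blast
    qed
    have g2: "cinner w (\<lambda>i. s i - t i) = 0" if "w \<in> T2" for w
    proof -
      have "cinner w (\<lambda>i. s i - t i) = 0" if wG: "w \<in> {tens a b |a b. a \<in> h2A \<and> b \<in> h2B}" for w
      proof -
        obtain a b where w: "w = tens a b" "a \<in> h2A" "b \<in> h2B" using wG by blast
        have "R2 w = w" unfolding w(1) R2_def using op_tens_tens[OF lP2 lQ2, of a b] proj_fix[OF assms(2) w(2)] proj_fix[OF assms(4) w(3)]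
          by (simp add: P2_def Q2_def)
        then have "cinner w (\<lambda>i. s i - t i) = cinner w (R2 (\<lambda>i. s i - t i))"
          using saR2 unfolding sa_def by metis
        also have "\<dots> = 0" using lin_diff[OF lR2] R2t by (simp add: cinner_zero_right)
        finally show ?thesis .
      qed
      then show ?thesis using orth_span that unfolding T2_def tens_sub_def by blast
    qed
    show ?thesis using orth_span[of "T1 \<union> T2"] g1 g2 that unfolding K_def ssup_def by blast
  qed
  have pK: "proj K s = t" by (rule proj_eqI[OF Kc tK]) (use orth in blast)
  have "cinner s t = cinner s (R1 s) + cinner s (R2 s) - cinner s (R12 s)"
    unfolding t_def by (simp add: cinner_diff_right cinner_add_right)
  moreover have "Re (cinner s (R12 s)) \<ge> 0" by (rule isproj_pos[OF iR12])
  ultimately have "Re (cinner s t) \<le> Re (cinner s (R1 s)) + Re (cinner s (R2 s))" by simp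
  then have fin: "Re (cinner s t) \<le> Re (cinner s (op_tens (proj h1A) (proj h1B) s)) + Re (cinner s (op_tens (proj h2A) (proj h2B) s))"
    unfolding R1_def R2_def P1_def P2_def Q1_def Q2_def .
  have pK': "proj (ssup (tens_sub h1A h1B) (tens_sub h2A h2B)) s = t" using pK unfolding K_def T1_def T2_def .
  show ?thesis unfolding pK' by (rule fin)
qed

end
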